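(* Let $n\ge2$ be an integer and $B(0,1)\subseteq\mathbb{R}^n$ the closed unit ball. If $A\subseteq B(0,1)$ is a Lusin set, then for every hyperplane $l$ tangent to $B(0,1)$, with $\pi:\mathbb{R}^n\to l$ the orthogonal projection, $\pi[A]$ is a Lusin set in $\pi[B(0,1)]$. The same holds with "Lusin set" replaced by "Sierpiński set".
   Context: A Lusin set in a Polish space $Y$ is an uncountable set $S\subseteq Y$ such that $S\cap M$ is countable for every meager $M\subseteq Y$. A Sierpiński set is an uncountable set $S$ such that $S\cap N$ is countable for every Lebesgue null set $N$. *)

theory Defs
  imports "HOL-Analysis.Analysis"
begin

definition nowhere_dense_in :: "'a topology \<Rightarrow> 'a set \<Rightarrow> bool" where
  "nowhere_dense_in T S \<longleftrightarrow> S \<subseteq> topspace T \<and> T interior_of (T closure_of S) = {}"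

definition meager_in :: "'a topology \<Rightarrow> 'a set \<Rightarrow> bool" where
  "meager_in T M \<longleftrightarrow> (\<exists>F. countable F \<and> (\<forall>S\<in>F. nowhere_dense_in T S) \<and> M = \<Union>F)"

definition lusin_in :: "'a topology \<Rightarrow> 'a set \<Rightarrow> bool" where
  "lusin_in T S \<longleftrightarrow> S \<subseteq> topspace T \<and> uncountable S \<and> (\<forall>M. meager_in T M \<longrightarrow> countable (S \<inter> M))"

definition sierpinski_in :: "'a measure \<Rightarrow> 'a set \<Rightarrow> 'a set \<Rightarrow> bool" where
  "sierpinski_in M Y S \<longleftrightarrow> S \<subseteq> Y \<and> uncountable S \<and> (\<forall>N\<in>null_sets M. countable (S \<inter> N))"

text \<open>Hyperplane tangent to the unit sphere at the unit vector u, and orthogonal projection onto it.\<close>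
definition tangent_hyperplane :: "'a::euclidean_space \<Rightarrow> 'a set" where
  "tangent_hyperplane u = {x. x \<bullet> u = 1}"

definition tproj :: "'a::euclidean_space \<Rightarrow> 'a \<Rightarrow> 'a" where
  "tproj u x = x - (x \<bullet> u - 1) *\<^sub>R u"

end

theory Submission imports Defs begin

lemma tproj_dot: "norm u = 1 \<Longrightarrow> tproj u x \<bullet> u = 1"
  by (simp add: tproj_def inner_diff_left norm_eq_1 algebra_simps)

lemma tproj_decomp: "x = tproj u x + (x \<bullet> u - 1) *\<^sub>R u"
  by (simp add: tproj_def)

lemma tproj_shift: "norm u = 1 \<Longrightarrow> z \<bullet> u = 1 \<Longrightarrow> tproj u (z + c *\<^sub>R u) = z"
  by (simp add: tproj_def inner_add_left norm_eq_1 algebra_simps)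

lemma cont_tproj: "continuous_on S (tproj u)"
  unfolding tproj_def by (intro continuous_intros)

lemma line_negligible:
  fixes u :: "'a::euclidean_space"
  assumes "DIM('a) \<ge> 2"
  shows "negligible {x. tproj u x = p}"
proof -
  have "{x. tproj u x = p} \<subseteq> (\<lambda>t::real. p + t *\<^sub>R u) ` UNIV"
    by clarsimp (metis tproj_decomp rangeI)
  moreover have "negligible ((\<lambda>t::real. p + t *\<^sub>R u) ` UNIV)"
    by (rule negligible_differentiable_image_lowdim) (use assms in \<open>auto intro!: derivative_intros\<close>)
  ultimately show ?thesis using negligible_subset by blast
qed

lemma ball_in_open:
  fixes T :: "'a::euclidean_space set"
  assumes "openin (top_of_set (cball 0 1)) T" "T \<noteq> {}"
  obtains x r where "r > 0" "ball x r \<subseteq> T" "x \<in> cball 0 1"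
proof -
  obtain U where U: "open U" "T = cball 0 1 \<inter> U" using assms(1) by (auto simp: openin_open)
  have "U \<inter> closure (ball (0::'a) 1) \<noteq> {}" using assms(2) U by auto
  then have "U \<inter> ball 0 1 \<noteq> {}" using open_Int_closure_eq_empty[OF U(1)] by blast
  then obtain x where x: "x \<in> U \<inter> ball 0 1" by blast
  moreover have "open (U \<inter> ball 0 1)" using U by auto
  ultimately obtain r where "r > 0" "ball x r \<subseteq> U \<inter> ball 0 1" using open_contains_ball by blast
  then show ?thesis using that[of r x] U x ball_subset_cball[of 0 1] by blast
qed

lemma nd_pre:
  fixes u :: "'a::euclidean_space"
  assumes u: "norm u = 1" and S: "nowhere_dense_in (top_of_set (tproj u ` cball 0 1)) S"
  shows "nowhere_dense_in (top_of_set (cball 0 1)) (cball 0 1 \<inter> tproj u -` S)"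
proof -
  define D where "D = tproj u ` cball (0::'a) 1"
  define S' where "S' = cball (0::'a) 1 \<inter> tproj u -` S"
  have SD: "S \<subseteq> D" and H: "\<And>T. openin (top_of_set D) T \<Longrightarrow> T \<subseteq> D \<inter> closure (D \<inter> S) \<Longrightarrow> T = {}"
    using S unfolding nowhere_dense_in_def D_def interior_of_eq_empty closure_of_subtopology by auto
  have img: "tproj u ` closure S' \<subseteq> closure S"
    by (rule image_closure_subset) (auto simp: cont_tproj S'_def intro: closure_subset[THEN subsetD])
  have "T = {}" if T: "openin (top_of_set (cball 0 1)) T" "T \<subseteq> cball 0 1 \<inter> closure (cball 0 1 \<inter> S')" for T
  proof (rule ccontr)
    assume "T \<noteq> {}"
    then obtain x r where xr: "r > 0" "ball x r \<subseteq> T" "x \<in> cball 0 1" using ball_in_open T(1) by metis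
    define W where "W = D \<inter> ball (tproj u x) r"
    have "openin (top_of_set D) W" unfolding W_def by (auto simp: openin_open)
    moreover have "W \<subseteq> D \<inter> closure (D \<inter> S)"
    proof
      fix z assume z: "z \<in> W"
      then have zD: "z \<in> D" and zd: "dist (tproj u x) z < r" by (auto simp: W_def)
      have zu: "z \<bullet> u = 1" using zD u tproj_dot by (auto simp: D_def)
      define w where "w = z + (x \<bullet> u - 1) *\<^sub>R u"
      have pw: "tproj u w = z" using tproj_shift[OF u zu] w_def by simp
      have "dist x w = dist (tproj u x) z" unfolding w_def tproj_def dist_norm
        by (simp add: algebra_simps)
      then have "w \<in> ball x r" using zd by (simp add: dist_commute)
      then have "w \<in> closure S'" using xr T(2) S'_def by auto
      then have "z \<in> closure S" using img pw by auto
      then show "z \<in> D \<inter> closure (D \<inter> S)" using zD SD by (simp add: Int_absorb1)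
    qed
    ultimately have "W = {}" using H by blast
    moreover have "tproj u x \<in> W" using xr by (auto simp: W_def D_def)
    ultimately show False by auto
  qed
  then show ?thesis unfolding nowhere_dense_in_def interior_of_eq_empty closure_of_subtopology S'_def[symmetric]
    by (auto simp: S'_def)
qed

lemma line_nd:
  fixes u :: "'a::euclidean_space"
  assumes "DIM('a) \<ge> 2"
  shows "nowhere_dense_in (top_of_set (cball 0 1)) (cball 0 1 \<inter> {x. tproj u x = p})"
proof -
  have cl: "closed (cball (0::'a) 1 \<inter> {x. tproj u x = p})"
    by (intro closed_Int closed_cball closed_Collect_eq) (auto simp: tproj_def intro!: continuous_intros)
  have "T = {}" if T: "openin (top_of_set (cball 0 1)) T" "T \<subseteq> cball 0 1 \<inter> {x. tproj u x = p}" for T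
  proof (rule ccontr)
    assume "T \<noteq> {}"
    then obtain x r where xr: "r > 0" "ball x r \<subseteq> T" using ball_in_open T(1) by metis
    then have "negligible (ball x r)" using line_negligible[OF assms, of u p] T(2) negligible_subset by blast
    then show False using open_not_negligible[of "ball x r"] xr by auto
  qed
  then show ?thesis unfolding nowhere_dense_in_def interior_of_eq_empty closure_of_subtopology
    using cl by (auto simp: closure_closed Int_absorb1 Int_assoc)
qed

lemma lusin_part:
  fixes u :: "'a::euclidean_space"
  assumes dim: "DIM('a) \<ge> 2" and u: "norm u = 1" and A: "lusin_in (top_of_set (cball 0 1)) A"
  shows "lusin_in (top_of_set (tproj u ` cball 0 1)) (tproj u ` A)"
proof -
  have AB: "A \<subseteq> cball 0 1" and unc: "uncountable A"
    and L: "\<And>M. meager_in (top_of_set (cball 0 1)) M \<Longrightarrow> countable (A \<inter> M)"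
    using A by (auto simp: lusin_in_def)
  have "countable (tproj u ` A \<inter> M)" if M: "meager_in (top_of_set (tproj u ` cball 0 1)) M" for M
  proof -
    obtain F where F: "countable F" "\<And>S. S \<in> F \<Longrightarrow> nowhere_dense_in (top_of_set (tproj u ` cball 0 1)) S" "M = \<Union>F"
      using M by (auto simp: meager_in_def)
    have "meager_in (top_of_set (cball 0 1)) (\<Union>((\<lambda>S. cball 0 1 \<inter> tproj u -` S) ` F))"
      unfolding meager_in_def
      by (rule exI[where x="(\<lambda>S. cball 0 1 \<inter> tproj u -` S) ` F"]) (use F nd_pre[OF u] in auto)
    then have "countable (A \<inter> \<Union>((\<lambda>S. cball 0 1 \<inter> tproj u -` S) ` F))" using L by blast
    moreover have "A \<inter> \<Union>((\<lambda>S. cball 0 1 \<inter> tproj u -` S) ` F) = A \<inter> tproj u -` M" using AB F(3) by auto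
    ultimately have "countable (tproj u ` (A \<inter> tproj u -` M))" by (metis countable_image)
    moreover have "tproj u ` A \<inter> M \<subseteq> tproj u ` (A \<inter> tproj u -` M)" by auto
    ultimately show ?thesis using countable_subset by blast
  qed
  moreover have "uncountable (tproj u ` A)"
  proof
    assume c: "countable (tproj u ` A)"
    define F where "F = (\<lambda>p. cball 0 1 \<inter> {x. tproj u x = p}) ` (tproj u ` A)"
    have "meager_in (top_of_set (cball 0 1)) (\<Union>F)"
      unfolding meager_in_def
      by (rule exI[where x=F]) (use c line_nd[OF dim] in \<open>auto simp: F_def\<close>)
    then have "countable (A \<inter> \<Union>F)" using L by blast
    moreover have "A \<inter> \<Union>F = A" using AB by (auto simp: F_def)
    ultimately show False using unc by simp
  qed
  ultimately show ?thesis using AB by (auto simp: lusin_in_def)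
qed

lemma iso_linear:
  fixes f :: "'a::real_inner \<Rightarrow> 'b::real_inner"
  assumes f0: "f 0 = 0" and fd: "\<forall>x y. dist (f x) (f y) = dist x y"
  shows "linear f"
proof -
  {
    fix v w
    have "norm (f x) = norm x" for x
      by (metis dist_0_norm f0 fd)
    then have "f v \<bullet> f w = (v \<bullet> w)"
      unfolding dot_norm_neg dist_norm[symmetric]
      by (simp add: fd power2_eq_square field_simps)
  }
  then show ?thesis
    unfolding linear_iff vector_eq[where 'a="'b"] scalar_mult_eq_scaleR
    by (simp add: inner_add field_simps)
qed

lemma sierp_part:
  fixes u :: "'a::euclidean_space" and \<phi> :: "'b::euclidean_space \<Rightarrow> 'a"
  assumes dim: "DIM('a) \<ge> 2" and u: "norm u = 1" and A: "sierpinski_in lebesgue (cball 0 1) A"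
    and iso: "\<forall>x y. dist (\<phi> x) (\<phi> y) = dist x y" and rng: "range \<phi> = tangent_hyperplane u"
  shows "sierpinski_in lebesgue (\<phi> -` (tproj u ` cball 0 1)) (\<phi> -` (tproj u ` A))"
proof -
  have AB: "A \<subseteq> cball 0 1" and unc: "uncountable A"
    and Sn: "\<And>N. N \<in> null_sets lebesgue \<Longrightarrow> countable (A \<inter> N)"
    using A by (auto simp: sierpinski_in_def)
  define L where "L y = \<phi> y - \<phi> 0" for y
  have linL: "linear L"
    by (rule iso_linear) (use iso in \<open>auto simp: L_def dist_norm\<close>)
  have phiH: "\<phi> y \<bullet> u = 1" for y using rng by (auto simp: tangent_hyperplane_def)
  have Lu: "u \<bullet> L y = 0" for y using phiH[of y] phiH[of 0] by (simp add: L_def inner_diff_right inner_commute)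
  have injphi: "inj \<phi>" using iso by (metis dist_eq_0_iff injI)
  have injL: "inj L" using injphi by (auto simp: L_def inj_on_def)
  have "dim (range L) = dim (UNIV :: 'b set)"
    by (rule dim_image_eq[OF linL]) (use injL in \<open>auto simp: inj_on_def\<close>)
  moreover have "dim (range L) \<le> dim {x. u \<bullet> x = 0}"
    by (rule dim_subset) (use Lu in auto)
  moreover have "u \<noteq> 0" using u by auto
  ultimately have dimle: "DIM('b) \<le> DIM('a) - 1" using dim_hyperplane[of u] by simp
  then have dimle2: "DIM('b \<times> real) \<le> DIM('a)" using dim by simp
  define G where "G z = \<phi> 0 + L (fst z) + snd z *\<^sub>R u" for z :: "'b \<times> real"
  have "linear (\<lambda>z::'b \<times> real. L (fst z) + snd z *\<^sub>R u)"
    using linL unfolding linear_iff by (simp add: algebra_simps)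
  then have bl: "bounded_linear (\<lambda>z::'b \<times> real. L (fst z) + snd z *\<^sub>R u)"
    by (simp add: linear_conv_bounded_linear)
  have Gdiff: "G differentiable_on S" for S
    unfolding G_def add.assoc
    by (intro differentiable_on_add differentiable_on_const bounded_linear_imp_differentiable_on[OF bl])
  have "countable (\<phi> -` (tproj u ` A) \<inter> N)" if N: "N \<in> null_sets lebesgue" for N
  proof -
    obtain N' where N': "N' \<in> null_sets lborel" "N \<subseteq> N'" using N[unfolded null_sets_completion_iff2] by blast
    have "N' \<times> UNIV \<in> null_sets (lborel \<Otimes>\<^sub>M (lborel::real measure))"
      by (rule lborel.times_in_null_sets1[OF N'(1)]) simp
    then have "N' \<times> UNIV \<in> null_sets (lborel :: ('b \<times> real) measure)" by (simp add: lborel_prod)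
    moreover have "N \<times> (UNIV::real set) \<subseteq> N' \<times> UNIV" using N'(2) by auto
    ultimately have "N \<times> (UNIV::real set) \<in> null_sets (lebesgue :: ('b \<times> real) measure)"
      using null_sets_completion_subset null_sets_completionI by metis
    then have "negligible (N \<times> (UNIV::real set))" by (rule negligible_iff_null_sets[THEN iffD2])
    then have "negligible (G ` (N \<times> UNIV))"
      by (intro negligible_differentiable_image_negligible[OF dimle2] Gdiff)
    then have c: "countable (A \<inter> G ` (N \<times> UNIV))" by (intro Sn negligible_iff_null_sets[THEN iffD1])
    have "\<phi> ` (\<phi> -` (tproj u ` A) \<inter> N) \<subseteq> tproj u ` (A \<inter> G ` (N \<times> UNIV))"
    proof clarify
      fix y a assume y: "y \<in> N" and a: "a \<in> A" "\<phi> y = tproj u a"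
      have "G (y, a \<bullet> u - 1) = a"
        using a(2) tproj_decomp[of a u] by (simp add: G_def L_def)
      then have "a \<in> G ` (N \<times> UNIV)" by (rule image_eqI[OF sym]) (use y in auto)
      then show "\<phi> y \<in> tproj u ` (A \<inter> G ` (N \<times> UNIV))" using a by auto
    qed
    then have "countable (\<phi> ` (\<phi> -` (tproj u ` A) \<inter> N))" by (rule countable_subset[OF _ countable_image[OF c]])
    then show ?thesis by (rule countable_image_inj_on[OF _ inj_on_subset[OF injphi]]) simp
  qed
  moreover have "uncountable (\<phi> -` (tproj u ` A))"
  proof
    assume c: "countable (\<phi> -` (tproj u ` A))"
    have "tproj u ` A \<subseteq> range \<phi>" using rng tproj_dot[OF u] by (auto simp: tangent_hyperplane_def)
    then have eq: "\<phi> ` (\<phi> -` (tproj u ` A)) = tproj u ` A" by (simp add: image_vimage_eq Int_absorb2)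
    have c2: "countable (tproj u ` A)" using countable_image[OF c, of \<phi>] unfolding eq .
    have "negligible (\<Union>p\<in>tproj u ` A. {x. tproj u x = p})"
      by (intro negligible_countable_Union countable_image c2) (auto intro: line_negligible[OF dim])
    then have "countable (A \<inter> (\<Union>p\<in>tproj u ` A. {x. tproj u x = p}))" by (intro Sn negligible_iff_null_sets[THEN iffD1])
    moreover have "A \<inter> (\<Union>p\<in>tproj u ` A. {x. tproj u x = p}) = A" by blast
    ultimately show False using unc by simp
  qed
  ultimately show ?thesis using AB by (auto simp: sierpinski_in_def)
qed

theorem mainTheorem9:
  fixes dummy :: "real ^ 'n" and dummy' :: "real ^ 'm"
  assumes "CARD('n) \<ge> 2"
  shows
   "(\<forall>A :: (real ^ 'n) set. lusin_in (top_of_set (cball 0 1)) A \<longrightarrow>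
       (\<forall>u :: real ^ 'n. norm u = 1 \<longrightarrow>
          lusin_in (top_of_set (tproj u ` cball 0 1)) (tproj u ` A)))
    \<and>
    (\<forall>A :: (real ^ 'n) set. sierpinski_in lebesgue (cball 0 1) A \<longrightarrow>
       (\<forall>u :: real ^ 'n. norm u = 1 \<longrightarrow>
          (\<forall>\<phi> :: real ^ 'm \<Rightarrow> real ^ 'n.
             (\<forall>x y. dist (\<phi> x) (\<phi> y) = dist x y) \<and> range \<phi> = tangent_hyperplane u \<longrightarrow>
             sierpinski_in lebesgue (\<phi> -` (tproj u ` cball 0 1)) (\<phi> -` (tproj u ` A)))))"
proof -
  have dim: "DIM(real ^ 'n) \<ge> 2" using assms by simp
  show ?thesis
    using lusin_part[OF dim] sierp_part[OF dim] by blast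
qed

end
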